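(* If $G$ is a nice connected graph of order $n$ and size $m$, then ${\rm ML}^{\rm W}(G) \leq 2(m+n-1)$; in particular ${\rm ML}^{\rm W}(G)\leq 4m$.
   Context: All graphs are finite and simple. A walk of a graph $G$ is a sequence of vertices $u_0u_1\dots u_p$ with $u_tu_{t+1}\in E(G)$ for all $t$ (vertices and edges may repeat); its length is $p$. For a walk $W$ of $G$, $G+W$ is the multigraph on $V(G)$ whose edge multiset consists of $E(G)$ together with each edge added as many times as $W$ traverses it. A multigraph is locally irregular if no two adjacent vertices have the same degree; a walk $W$ is irregularising if $G+W$ is locally irregular. A graph is nice if it is connected and not isomorphic to $K_2$. ${\rm ML}^{\rm W}(G)$ denotes the minimum length of an irregularising walk of $G$ (a walk of length $0$ is allowed). *)

theory Defs
  imports Main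
begin

definition simple_graph :: "'a set \<Rightarrow> 'a set set \<Rightarrow> bool" where
  "simple_graph V E \<longleftrightarrow> finite V \<and>
     (\<forall>e\<in>E. \<exists>u v. u \<noteq> v \<and> u \<in> V \<and> v \<in> V \<and> e = {u, v})"

definition is_walk :: "'a set \<Rightarrow> 'a set set \<Rightarrow> 'a list \<Rightarrow> bool" where
  "is_walk V E w \<longleftrightarrow> w \<noteq> [] \<and> set w \<subseteq> V \<and>
     (\<forall>i. i + 1 < length w \<longrightarrow> {w ! i, w ! (i + 1)} \<in> E)"

definition walk_length :: "'a list \<Rightarrow> nat" where
  "walk_length w = length w - 1"

definition connected_graph :: "'a set \<Rightarrow> 'a set set \<Rightarrow> bool" where
  "connected_graph V E \<longleftrightarrow> V \<noteq> {} \<and>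
     (\<forall>u\<in>V. \<forall>v\<in>V. \<exists>w. is_walk V E w \<and> hd w = u \<and> last w = v)"

definition nice_graph :: "'a set \<Rightarrow> 'a set set \<Rightarrow> bool" where
  "nice_graph V E \<longleftrightarrow> connected_graph V E \<and> \<not> (card V = 2 \<and> card E = 1)"

text \<open>Degree of v in the multigraph G+W: degree in G plus number of traversals of
  W of edges incident with v.\<close>
definition deg_plus_walk :: "'a set set \<Rightarrow> 'a list \<Rightarrow> 'a \<Rightarrow> nat" where
  "deg_plus_walk E w v = card {e \<in> E. v \<in> e} +
     card {i. i + 1 < length w \<and> (w ! i = v \<or> w ! (i + 1) = v)}"

text \<open>G+W has the same adjacency as G (W only uses edges of G).\<close>
definition irregularising :: "'a set \<Rightarrow> 'a set set \<Rightarrow> 'a list \<Rightarrow> bool" where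
  "irregularising V E w \<longleftrightarrow> is_walk V E w \<and>
     (\<forall>u v. {u, v} \<in> E \<longrightarrow> deg_plus_walk E w u \<noteq> deg_plus_walk E w v)"

definition MLW :: "'a set \<Rightarrow> 'a set set \<Rightarrow> nat" where
  "MLW V E = (LEAST k. \<exists>w. irregularising V E w \<and> walk_length w = k)"

end

theory Submission imports Defs begin

fun wd :: "'a list \<Rightarrow> 'a \<Rightarrow> nat" where
  "wd (x#y#r) v = (if x = v \<or> y = v then 1 else 0) + wd (y#r) v"
| "wd _ v = 0"

lemma wd_card: "wd w v = card {i. i+1 < length w \<and> (w!i = v \<or> w!(i+1) = v)}"
proof (induction w v rule: wd.induct)
  case (1 x y r v)
  have eq: "{i. i+1 < length (x#y#r) \<and> ((x#y#r)!i = v \<or> (x#y#r)!(i+1) = v)}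
     = (if x=v \<or> y=v then {0} else {}) \<union> Suc ` {i. i+1 < length (y#r) \<and> ((y#r)!i = v \<or> (y#r)!(i+1) = v)}"
    apply (rule set_eqI)
    subgoal for i by (cases i) (auto simp: image_def)
    done
  have fin: "finite {i. i+1 < length (y#r) \<and> ((y#r)!i = v \<or> (y#r)!(i+1) = v)}" by simp
  show ?case using "1" unfolding eq
    by (subst card_Un_disjoint) (auto simp: card_image fin)
qed auto

fun wk :: "'a set set \<Rightarrow> 'a list \<Rightarrow> bool" where
  "wk E (x#y#r) = ({x,y} \<in> E \<and> wk E (y#r))"
| "wk E _ = True"

lemma wk_iff: "wk E w = (\<forall>i. i+1 < length w \<longrightarrow> {w!i, w!(i+1)} \<in> E)"
proof (induction E w rule: wk.induct)
  case (1 E x y r)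
  show ?case unfolding wk.simps "1"
    apply (auto)
    subgoal for i by (cases i) auto
    done
qed auto

lemma wd_app: "wd (xs @ y # ys) v = wd (xs @ [y]) v + wd (y # ys) v"
proof (induction xs)
  case (Cons a xs) then show ?case by (cases xs) auto
qed auto

lemma wk_app: "wk E (xs @ y # ys) = (wk E (xs @ [y]) \<and> wk E (y # ys))"
proof (induction xs)
  case (Cons a xs) then show ?case by (cases xs) auto
qed auto

lemma wd_notin: "v \<notin> set w \<Longrightarrow> wd w v = 0"
  by (induction w v rule: wd.induct) auto

definition exc :: "'a \<Rightarrow> 'a \<Rightarrow> nat \<Rightarrow> 'a list" where
  "exc x p j = concat (replicate j [x,p])"

lemma exc_Suc: "exc x p (Suc j) = x # p # exc x p j" by (simp add: exc_def)
lemma exc_0: "exc x p 0 = []" by (simp add: exc_def)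

lemma wd_exc: "wd (p # exc x p j @ ys) v = (if v = x \<or> v = p then 2*j else 0) + wd (p # ys) v"
  by (induction j) (auto simp: exc_Suc exc_0)

lemma wk_exc: "{p,x} \<in> E \<Longrightarrow> wk E (p # exc x p j @ ys) = wk E (p # ys)"
  by (induction j) (auto simp: exc_Suc exc_0 insert_commute)

lemma len_exc: "length (exc x p j) = 2*j" by (induction j) (auto simp: exc_Suc exc_0)
lemma set_exc: "set (exc x p j) = (if j = 0 then {} else {x,p})"
  by (induction j) (auto simp: exc_Suc exc_0)
lemma last_exc: "last (p # exc x p j) = p"
  by (induction j) (auto simp: exc_Suc exc_0)

lemma last_exc2: "last (p # exc x p j @ ys) = (if ys = [] then p else last ys)"
  using last_exc[of p x j] by (cases ys) (simp_all del: last.simps add: last_append, simp)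

lemma excursion:
  assumes "p \<in> set w" "{p,x} \<in> E" "wk E w"
  shows "\<exists>w2. hd w2 = hd w \<and> last w2 = last w \<and> set w2 = set w \<union> (if j=0 then {} else {x})
     \<and> wk E w2 \<and> length w2 = length w + 2*j
     \<and> (\<forall>v. wd w2 v = wd w v + (if v = x \<or> v = p then 2*j else 0))"
proof -
  obtain w1 w3 where w: "w = w1 @ p # w3" using assms(1) by (meson split_list)
  define w2 where "w2 = w1 @ p # (exc x p j @ w3)"
  have "hd w2 = hd w" unfolding w2_def w by (cases w1) simp_all
  moreover have "last w2 = last w"
  proof -
    have "last w2 = last (p # exc x p j @ w3)" unfolding w2_def by (simp del: last.simps add: last_append)
    also have "\<dots> = last (p # w3)" by (simp only: last_exc2) (cases w3, simp_all)
    also have "\<dots> = last w" unfolding w by (simp del: last.simps add: last_append)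
    finally show ?thesis .
  qed
  moreover have "set w2 = set w \<union> (if j=0 then {} else {x})" unfolding w2_def w
    by (auto simp: set_exc)
  moreover have "wk E w2"
  proof -
    have "wk E w = (wk E (w1@[p]) \<and> wk E (p # w3))" unfolding w by (rule wk_app)
    moreover have "wk E w2 = (wk E (w1@[p]) \<and> wk E (p # exc x p j @ w3))" unfolding w2_def by (rule wk_app)
    ultimately show ?thesis using assms(3) wk_exc[OF assms(2)] by simp
  qed
  moreover have "length w2 = length w + 2*j" unfolding w2_def w by (simp add: len_exc)
  moreover have "\<forall>v. wd w2 v = wd w v + (if v = x \<or> v = p then 2*j else 0)"
  proof
    fix v
    have "wd w v = wd (w1@[p]) v + wd (p # w3) v" unfolding w by (rule wd_app)
    moreover have "wd w2 v = wd (w1@[p]) v + wd (p # exc x p j @ w3) v" unfolding w2_def by (rule wd_app)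
    ultimately show "wd w2 v = wd w v + (if v = x \<or> v = p then 2*j else 0)" by (simp only: wd_exc)
  qed
  ultimately show ?thesis by blast
qed

lemma pre_card: "finite A \<Longrightarrow> finite {k::nat. c + 2*k \<in> A} \<and> card {k::nat. c + 2*k \<in> A} \<le> card A"
proof -
  assume f: "finite A"
  have inj: "inj (\<lambda>k::nat. c + 2*k)" by (auto simp: inj_def)
  have eq: "{k::nat. c + 2*k \<in> A} = (\<lambda>k. c + 2*k) -` A" by auto
  have "finite {k::nat. c + 2*k \<in> A}" unfolding eq using finite_vimageI[OF f inj] .
  moreover have "card {k::nat. c + 2*k \<in> A} \<le> card A"
    by (rule card_inj_on_le[OF inj_on_subset[OF inj]]) (auto simp: f)
  ultimately show ?thesis by blast
qed

lemma pick: "finite (A::nat set) \<Longrightarrow> \<exists>k \<le> card A. k \<notin> A"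
proof (rule ccontr)
  assume f: "finite A" and "\<not> (\<exists>k \<le> card A. k \<notin> A)"
  then have "{0..card A} \<subseteq> A" by auto
  then have "card {0..card A} \<le> card A" using f by (rule card_mono[rotated])
  then show False by simp
qed

inductive good :: "'a set set \<Rightarrow> 'a list \<Rightarrow> bool" for E where
  base: "r \<noteq> u1 \<Longrightarrow> r \<noteq> u2 \<Longrightarrow> u1 \<noteq> u2 \<Longrightarrow> {r,u1} \<in> E \<Longrightarrow> {r,u2} \<in> E \<Longrightarrow> good E [r,u1,u2]"
| step: "good E xs \<Longrightarrow> x \<notin> set xs \<Longrightarrow> p \<in> set xs \<Longrightarrow> {p,x} \<in> E \<Longrightarrow> good E (xs @ [x])"

lemma good_props: "good E xs \<Longrightarrow> distinct xs \<and> xs \<noteq> [] \<and> length xs \<le> card {e\<in>E. e \<subseteq> set xs} + 1"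
proof (induction rule: good.induct)
  case (base r u1 u2)
  have "{{r,u1},{r,u2}} \<subseteq> {e\<in>E. e \<subseteq> set [r,u1,u2]}" using base(4,5) by simp
  moreover have "finite {e\<in>E. e \<subseteq> set [r,u1,u2]}"
    by (rule finite_subset[of _ "Pow (set [r,u1,u2])"]) auto
  ultimately have "card {{r,u1},{r,u2}} \<le> card {e\<in>E. e \<subseteq> set [r,u1,u2]}" by (rule card_mono[rotated])
  moreover have "{r,u1} \<noteq> {r,u2}" using base(3) by (simp add: doubleton_eq_iff)
  then have "card {{r,u1},{r,u2}} = 2" by simp
  ultimately show ?case using base(1-3) by simp
next
  case (step xs x p)
  let ?A = "{e\<in>E. e \<subseteq> set xs}"
  let ?B = "{e\<in>E. e \<subseteq> set (xs@[x])}"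
  have "insert {p,x} ?A \<subseteq> ?B" using step(3,4) by auto
  moreover have "finite ?B"
    by (rule finite_subset[of _ "Pow (set (xs@[x]))"]) auto
  ultimately have "card (insert {p,x} ?A) \<le> card ?B" by (rule card_mono[rotated])
  moreover have "{p,x} \<notin> ?A" using step(2) by auto
  moreover have "finite ?A" by (rule finite_subset[of _ "Pow (set xs)"]) auto
  ultimately have "card ?A + 1 \<le> card ?B" by simp
  then show ?case using step(2,5) by simp
qed

lemma arith1: "(L::nat) \<le> 1 + T + 2*(a + s') \<Longrightarrow> s' \<le> s + N \<Longrightarrow> a + N \<le> a1 \<Longrightarrow> L \<le> 1 + T + 2*(a1 + s)"
  by simp

lemma arith2: "(Lw::nat) = L + 2*(k+1) \<Longrightarrow> L \<le> 1 + T + 2*(a1 + s) \<Longrightarrow> k \<le> c \<Longrightarrow> T + 2 = 2*l \<Longrightarrow> Lw \<le> 1 + 2*l + 2*(a1 + (c + s))"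
  by simp

lemma main:
  assumes "good E xs"
  shows "\<forall>(b::'a \<Rightarrow> nat) (F::'a \<Rightarrow> nat set). (\<forall>v. finite (F v)) \<longrightarrow> (\<exists>w. w \<noteq> [] \<and> hd w = hd xs \<and> last w = hd xs \<and> set w = set xs \<and> wk E w \<and>
   (\<forall>u v. {u,v} \<in> E \<longrightarrow> u \<in> set xs \<longrightarrow> v \<in> set xs \<longrightarrow> u \<noteq> v \<longrightarrow> b u + wd w u \<noteq> b v + wd w v) \<and>
   (\<forall>v \<in> set xs. b v + wd w v \<notin> F v) \<and>
   length w \<le> 1 + 2*(length xs - 1) + 2*(card {e\<in>E. e \<subseteq> set xs} + (\<Sum>v\<in>set xs. card (F v))))"
  using assms
proof (induction rule: good.induct)
  case (base r u1 u2)
  show ?case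
  proof (intro allI impI)
    fix b :: "'a \<Rightarrow> nat" and F :: "'a \<Rightarrow> nat set"
    assume fin: "\<forall>v. finite (F v)"
    define A1 where "A1 = {k. (b u1 + 2) + 2*k \<in> F u1} \<union> {k. (b r + 2) + 2*k \<in> {b u2}}"
    have p1: "finite {k. (b u1 + 2) + 2*k \<in> F u1} \<and> card {k. (b u1 + 2) + 2*k \<in> F u1} \<le> card (F u1)"
      using pre_card fin by blast
    have p2: "finite {k. (b r + 2) + 2*k \<in> {b u2}} \<and> card {k. (b r + 2) + 2*k \<in> {b u2}} \<le> card {b u2}"
      using pre_card by blast
    have finA1: "finite A1" unfolding A1_def using p1 p2 by blast
    have "card A1 \<le> card {k. (b u1 + 2) + 2*k \<in> F u1} + card {k. (b r + 2) + 2*k \<in> {b u2}}"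
      unfolding A1_def by (rule card_Un_le)
    then have cA1: "card A1 \<le> card (F u1) + 1" using p1 p2 by simp
    obtain k1 where k1: "k1 \<le> card A1" "k1 \<notin> A1" using pick[OF finA1] by blast
    define e where "e = (if {u1,u2} \<in> E then {b u1 + 2*k1 + 2} else {})"
    have fe: "finite e" "card e = (if {u1,u2} \<in> E then 1 else 0)" unfolding e_def by auto
    define B1 where "B1 = {k. (b u2 + 2) + 2*k \<in> F u2}"
    define B2 where "B2 = {k. (b r + 2*k1 + 4) + 2*k \<in> F r}"
    define B3 where "B3 = {k. (b r + 2*k1 + 4) + 2*k \<in> {b u1 + 2*k1 + 2}}"
    define B4 where "B4 = {k. (b u2 + 2) + 2*k \<in> e}"
    have q1: "finite B1 \<and> card B1 \<le> card (F u2)" unfolding B1_def using pre_card fin by blast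
    have q2: "finite B2 \<and> card B2 \<le> card (F r)" unfolding B2_def using pre_card fin by blast
    have q3: "finite B3 \<and> card B3 \<le> 1"
    proof -
      have "finite {b u1 + 2*k1 + 2}" by simp
      from pre_card[OF this, of "b r + 2*k1 + 4"] show ?thesis unfolding B3_def by (metis card.empty card_insert_disjoint empty_iff finite.emptyI One_nat_def)
    qed
    have q4: "finite B4 \<and> card B4 \<le> card e" unfolding B4_def using pre_card fe by blast
    define A2 where "A2 = B1 \<union> B2 \<union> B3 \<union> B4"
    have finA2: "finite A2" unfolding A2_def using q1 q2 q3 q4 by blast
    have "card A2 \<le> card B1 + card B2 + card B3 + card B4" unfolding A2_def
      by (meson card_Un_le add_le_mono le_trans order_refl)
    then have cA2: "card A2 \<le> card (F u2) + card (F r) + 1 + card e" using q1 q2 q3 q4 by linarith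
    obtain k2 where k2: "k2 \<le> card A2" "k2 \<notin> A2" using pick[OF finA2] by blast
    have w0: "r \<in> set [r]" "wk E [r]" by auto
    obtain wa where wa: "hd wa = r" "last wa = r" "set wa = {r,u1}" "wk E wa" "length wa = 1 + 2*(k1+1)"
      "\<forall>v. wd wa v = (if v = u1 \<or> v = r then 2*(k1+1) else 0)"
      using excursion[OF w0(1) base(4) w0(2), of "k1+1"] by auto
    have ra: "r \<in> set wa" using wa by auto
    obtain wb where wb: "hd wb = r" "last wb = r" "set wb = {r,u1,u2}" "wk E wb" "length wb = 1 + 2*(k1+1) + 2*(k2+1)"
      "\<forall>v. wd wb v = (if v = u1 \<or> v = r then 2*(k1+1) else 0) + (if v = u2 \<or> v = r then 2*(k2+1) else 0)"
      using excursion[OF ra base(5) wa(4), of "k2+1"] wa by auto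
    have Dr: "b r + wd wb r = b r + 2*(k1+1) + 2*(k2+1)" using wb(6) by simp
    have Du1: "b u1 + wd wb u1 = b u1 + 2*(k1+1)" using wb(6) base(1-3) by auto
    have Du2: "b u2 + wd wb u2 = b u2 + 2*(k2+1)" using wb(6) base(1-3) by auto
    have c1: "b u1 + 2*(k1+1) \<notin> F u1" "b r + 2*(k1+1) \<noteq> b u2" using k1(2) unfolding A1_def by auto
    have c2: "b u2 + 2*(k2+1) \<notin> F u2" using k2(2) unfolding A2_def B1_def by auto
    have c3: "b r + 2*(k1+1) + 2*(k2+1) \<notin> F r"
    proof -
      have "k2 \<notin> B2" using k2(2) unfolding A2_def by blast
      then have "(b r + 2*k1 + 4) + 2*k2 \<notin> F r" unfolding B2_def by blast
      moreover have "(b r + 2*k1 + 4) + 2*k2 = b r + 2*(k1+1) + 2*(k2+1)" by simp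
      ultimately show ?thesis by metis
    qed
    have c4: "b r + 2*(k1+1) + 2*(k2+1) \<noteq> b u1 + 2*(k1+1)" using k2(2) unfolding A2_def B3_def by auto
    have c5: "{u1,u2} \<in> E \<Longrightarrow> b u1 + 2*(k1+1) \<noteq> b u2 + 2*(k2+1)" using k2(2) unfolding A2_def B4_def e_def by auto
    have edges: "\<forall>u v. {u,v} \<in> E \<longrightarrow> u \<in> set [r,u1,u2] \<longrightarrow> v \<in> set [r,u1,u2] \<longrightarrow> u \<noteq> v \<longrightarrow> b u + wd wb u \<noteq> b v + wd wb v"
    proof (intro allI impI)
      fix u v assume "{u,v} \<in> E" "u \<in> set [r,u1,u2]" "v \<in> set [r,u1,u2]" "u \<noteq> v"
      then show "b u + wd wb u \<noteq> b v + wd wb v"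
        using Dr Du1 Du2 c1 c4 c5 by (auto simp: insert_commute)
    qed
    have Fc: "\<forall>v \<in> set [r,u1,u2]. b v + wd wb v \<notin> F v"
    proof -
      have "b r + wd wb r \<notin> F r" using Dr c3 by metis
      moreover have "b u1 + wd wb u1 \<notin> F u1" using Du1 c1 by metis
      moreover have "b u2 + wd wb u2 \<notin> F u2" using Du2 c2 by metis
      ultimately show ?thesis by simp
    qed
    have "{{r,u1},{r,u2}} \<union> (if {u1,u2} \<in> E then {{u1,u2}} else {}) \<subseteq> {e\<in>E. e \<subseteq> set [r,u1,u2]}"
      using base(4,5) by auto
    moreover have "finite {e\<in>E. e \<subseteq> set [r,u1,u2]}"
      by (rule finite_subset[of _ "Pow (set [r,u1,u2])"]) auto
    ultimately have "card ({{r,u1},{r,u2}} \<union> (if {u1,u2} \<in> E then {{u1,u2}} else {})) \<le> card {e\<in>E. e \<subseteq> set [r,u1,u2]}"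
      by (rule card_mono[rotated])
    moreover have "card ({{r,u1},{r,u2}} \<union> (if {u1,u2} \<in> E then {{u1,u2}} else {})) = 2 + card e"
      using base(1-3) fe(2) by (auto simp: doubleton_eq_iff)
    ultimately have cE: "2 + card e \<le> card {e\<in>E. e \<subseteq> set [r,u1,u2]}" by simp
    have sF: "(\<Sum>v\<in>set [r,u1,u2]. card (F v)) = card (F r) + card (F u1) + card (F u2)"
      using base(1-3) by simp
    have "length wb \<le> 1 + 2*(length [r,u1,u2] - 1) + 2*(card {e\<in>E. e \<subseteq> set [r,u1,u2]} + (\<Sum>v\<in>set [r,u1,u2]. card (F v)))"
      using wb(5) cE sF k1(1) k2(1) cA1 cA2 by simp
    then show "\<exists>w. w \<noteq> [] \<and> hd w = hd [r,u1,u2] \<and> last w = hd [r,u1,u2] \<and> set w = set [r,u1,u2] \<and> wk E w \<and>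
   (\<forall>u v. {u,v} \<in> E \<longrightarrow> u \<in> set [r,u1,u2] \<longrightarrow> v \<in> set [r,u1,u2] \<longrightarrow> u \<noteq> v \<longrightarrow> b u + wd w u \<noteq> b v + wd w v) \<and>
   (\<forall>v \<in> set [r,u1,u2]. b v + wd w v \<notin> F v) \<and>
   length w \<le> 1 + 2*(length [r,u1,u2] - 1) + 2*(card {e\<in>E. e \<subseteq> set [r,u1,u2]} + (\<Sum>v\<in>set [r,u1,u2]. card (F v)))"
      using wb edges Fc by (intro exI[of _ wb]) auto
  qed
next
  case (step xs x p)
  have gp: "distinct xs \<and> xs \<noteq> [] \<and> length xs \<le> card {e\<in>E. e \<subseteq> set xs} + 1"
    using good_props[OF step(1)] .
  show ?case
  proof (intro allI impI)
    fix b :: "'a \<Rightarrow> nat" and F :: "'a \<Rightarrow> nat set"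
    assume fin: "\<forall>v. finite (F v)"
    define A where "A = {k. (b x + 2) + 2*k \<in> F x}"
    have pA: "finite A \<and> card A \<le> card (F x)" unfolding A_def using pre_card fin by blast
    obtain k where k: "k \<le> card A" "k \<notin> A" using pick pA by blast
    define dx where "dx = b x + 2*(k+1)"
    have dxF: "dx \<notin> F x" using k(2) unfolding A_def dx_def by simp
    define b' where "b' = b(p := b p + 2*(k+1))"
    define F' where "F' = (\<lambda>v. F v \<union> (if {v,x} \<in> E then {dx} else {}))"
    have fin': "\<forall>v. finite (F' v)" unfolding F'_def using fin by auto
    obtain w' where w': "w' \<noteq> []" "hd w' = hd xs" "last w' = hd xs" "set w' = set xs" "wk E w'"
      "\<forall>u v. {u,v} \<in> E \<longrightarrow> u \<in> set xs \<longrightarrow> v \<in> set xs \<longrightarrow> u \<noteq> v \<longrightarrow> b' u + wd w' u \<noteq> b' v + wd w' v"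
      "\<forall>v \<in> set xs. b' v + wd w' v \<notin> F' v"
      "length w' \<le> 1 + 2*(length xs - 1) + 2*(card {e\<in>E. e \<subseteq> set xs} + (\<Sum>v\<in>set xs. card (F' v)))"
      using step(5)[rule_format, of F' b'] fin' by blast
    have pw: "p \<in> set w'" using w'(4) step(3) by simp
    obtain w where w: "hd w = hd w'" "last w = last w'" "set w = set w' \<union> {x}" "wk E w"
      "length w = length w' + 2*(k+1)" "\<forall>v. wd w v = wd w' v + (if v = x \<or> v = p then 2*(k+1) else 0)"
      using excursion[OF pw step(4) w'(5), of "k+1"] by auto
    have wx: "wd w' x = 0" using wd_notin[of x w'] w'(4) step(2) by simp
    have Dv: "b v + wd w v = b' v + wd w' v" if "v \<in> set xs" for v
      using that step(2) w(6) unfolding b'_def by (cases "v = p") auto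
    have Dx: "b x + wd w x = dx" using w(6) wx unfolding dx_def by simp
    have edges: "\<forall>u v. {u,v} \<in> E \<longrightarrow> u \<in> set (xs@[x]) \<longrightarrow> v \<in> set (xs@[x]) \<longrightarrow> u \<noteq> v \<longrightarrow> b u + wd w u \<noteq> b v + wd w v"
    proof (intro allI impI)
      fix u v assume uv: "{u,v} \<in> E" "u \<in> set (xs@[x])" "v \<in> set (xs@[x])" "u \<noteq> v"
      show "b u + wd w u \<noteq> b v + wd w v"
      proof (cases "u = x")
        case True
        then have vx: "v \<in> set xs" "{v,x} \<in> E" using uv by (auto simp: insert_commute)
        then have "dx \<in> F' v" unfolding F'_def by simp
        moreover have "b' v + wd w' v \<notin> F' v" using w'(7) vx(1) by blast
        ultimately show ?thesis using Dv[OF vx(1)] Dx True by auto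
      next
        case False
        then have u: "u \<in> set xs" using uv by simp
        show ?thesis
        proof (cases "v = x")
          case True
          then have "dx \<in> F' u" using uv unfolding F'_def by simp
          moreover have "b' u + wd w' u \<notin> F' u" using w'(7) u by blast
          ultimately show ?thesis using Dv[OF u] Dx True by auto
        next
          case False
          then have v: "v \<in> set xs" using uv by simp
          have "b' u + wd w' u \<noteq> b' v + wd w' v" using w'(6) uv(1,4) u v by blast
          then show ?thesis using Dv[OF u] Dv[OF v] by simp
        qed
      qed
    qed
    have Fc: "\<forall>v \<in> set (xs@[x]). b v + wd w v \<notin> F v"
    proof
      fix v assume "v \<in> set (xs@[x])"
      then consider "v \<in> set xs" | "v = x" by auto
      then show "b v + wd w v \<notin> F v"
      proof cases
        case 1 then show ?thesis using Dv[OF 1] w'(7) unfolding F'_def by auto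
      next
        case 2 then show ?thesis using Dx dxF by simp
      qed
    qed
    let ?S = "set xs"
    let ?N = "card {v\<in>?S. {v,x} \<in> E}"
    have finS: "finite ?S" by simp
    have "(\<Sum>v\<in>?S. card (F' v)) \<le> (\<Sum>v\<in>?S. card (F v) + (if {v,x} \<in> E then 1 else 0))"
    proof (rule sum_mono)
      fix v assume "v \<in> ?S"
      show "card (F' v) \<le> card (F v) + (if {v,x} \<in> E then 1 else 0)"
        unfolding F'_def using card_Un_le[of "F v" "if {v, x} \<in> E then {dx} else {}"] by (auto split: if_splits)
    qed
    also have "\<dots> = (\<Sum>v\<in>?S. card (F v)) + ?N"
      by (simp add: sum.distrib sum.inter_filter[OF finS, symmetric])
    finally have sF': "(\<Sum>v\<in>?S. card (F' v)) \<le> (\<Sum>v\<in>?S. card (F v)) + ?N" .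
    let ?ES = "{e\<in>E. e \<subseteq> ?S}"
    let ?ES1 = "{e\<in>E. e \<subseteq> set (xs@[x])}"
    have finES1: "finite ?ES1" by (rule finite_subset[of _ "Pow (set (xs@[x]))"]) auto
    have finES: "finite ?ES" by (rule finite_subset[of _ "Pow ?S"]) auto
    have injI: "inj_on (\<lambda>v. {v,x}) {v\<in>?S. {v,x} \<in> E}"
      using step(2) by (auto simp: inj_on_def doubleton_eq_iff)
    have disj: "?ES \<inter> (\<lambda>v. {v,x}) ` {v\<in>?S. {v,x} \<in> E} = {}" using step(2) by auto
    have sub: "?ES \<union> (\<lambda>v. {v,x}) ` {v\<in>?S. {v,x} \<in> E} \<subseteq> ?ES1" by auto
    have "card (?ES \<union> (\<lambda>v. {v,x}) ` {v\<in>?S. {v,x} \<in> E}) = card ?ES + ?N"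
      using card_Un_disjoint[OF finES _ disj] card_image[OF injI] by simp
    then have cE: "card ?ES + ?N \<le> card ?ES1" using card_mono[OF finES1 sub] by simp
    have sx: "(\<Sum>v\<in>set (xs@[x]). card (F v)) = card (F x) + (\<Sum>v\<in>?S. card (F v))"
      using step(2) by simp
    have len: "length (xs@[x]) - 1 = length xs" "length xs \<ge> 1" using gp by (auto simp: Suc_le_eq)
    have "length w \<le> 1 + 2*(length (xs@[x]) - 1) + 2*(card ?ES1 + (\<Sum>v\<in>set (xs@[x]). card (F v)))"
    proof -
      define T where "T = 2*(length xs - 1)"
      have h0: "length w' \<le> 1 + T + 2*(card ?ES + (\<Sum>v\<in>?S. card (F' v)))" using w'(8) unfolding T_def .
      have h1: "length w' \<le> 1 + T + 2*(card ?ES1 + (\<Sum>v\<in>?S. card (F v)))"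
        using arith1[OF h0 sF' cE] .
      have h2: "k \<le> card (F x)" using k(1) pA by (meson le_trans)
      have h3: "T + 2 = 2*length xs" using len(2) unfolding T_def by simp
      have "length w \<le> 1 + 2*length xs + 2*(card ?ES1 + (card (F x) + (\<Sum>v\<in>?S. card (F v))))"
        using arith2[OF w(5) h1 h2 h3] .
      then show ?thesis by (simp only: len(1) sx)
    qed
    moreover have "w \<noteq> []" using w(3) by auto
    moreover have "hd w = hd (xs@[x])" using w(1) w'(2) gp by simp
    moreover have "last w = hd (xs@[x])" using w(2) w'(3) gp by simp
    moreover have "set w = set (xs@[x])" using w(3) w'(4) by simp
    ultimately show "\<exists>w. w \<noteq> [] \<and> hd w = hd (xs@[x]) \<and> last w = hd (xs@[x]) \<and> set w = set (xs@[x]) \<and> wk E w \<and>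
   (\<forall>u v. {u,v} \<in> E \<longrightarrow> u \<in> set (xs@[x]) \<longrightarrow> v \<in> set (xs@[x]) \<longrightarrow> u \<noteq> v \<longrightarrow> b u + wd w u \<noteq> b v + wd w v) \<and>
   (\<forall>v \<in> set (xs@[x]). b v + wd w v \<notin> F v) \<and>
   length w \<le> 1 + 2*(length (xs@[x]) - 1) + 2*(card ?ES1 + (\<Sum>v\<in>set (xs@[x]). card (F v)))"
      using w(4) edges Fc by blast
  qed
qed

lemma leave_list: "w \<noteq> [] \<Longrightarrow> hd w \<in> S \<Longrightarrow> last w \<notin> S \<Longrightarrow> \<exists>i. i+1 < length w \<and> w!i \<in> S \<and> w!(i+1) \<notin> S"
proof (induction w)
  case Nil then show ?case by simp
next
  case (Cons a w)
  show ?case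
  proof (cases "w = []")
    case True then show ?thesis using Cons by simp
  next
    case False
    show ?thesis
    proof (cases "hd w \<in> S")
      case True
      have "last w \<notin> S" using Cons(4) False by simp
      then obtain i where "i+1 < length w" "w!i \<in> S" "w!(i+1) \<notin> S" using Cons(1) False True by blast
      then show ?thesis by (intro exI[of _ "Suc i"]) simp
    next
      case nh: False
      have "(a#w)!1 = hd w" using False by (simp add: hd_conv_nth)
      then show ?thesis using Cons(3) nh False by (intro exI[of _ 0]) simp
    qed
  qed
qed

lemma leave:
  assumes "connected_graph V E" "S \<subseteq> V" "s \<in> S" "t \<in> V" "t \<notin> S"
  shows "\<exists>z\<in>S. \<exists>y\<in>V. y \<notin> S \<and> {z,y} \<in> E"
proof -
  obtain w where w: "is_walk V E w" "hd w = s" "last w = t"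
    using assms unfolding connected_graph_def by blast
  then have ne: "w \<noteq> []" and sw: "set w \<subseteq> V" and ed: "\<forall>i. i+1 < length w \<longrightarrow> {w!i, w!(i+1)} \<in> E"
    unfolding is_walk_def by auto
  obtain i where i: "i+1 < length w" "w!i \<in> S" "w!(i+1) \<notin> S"
    using leave_list[OF ne] w assms by auto
  have "w!(i+1) \<in> V" using sw i(1) nth_mem[of "i+1" w] by blast
  then show ?thesis using i ed by blast
qed

lemma extend:
  assumes "finite V" "connected_graph V E"
  shows "good E xs \<Longrightarrow> set xs \<subseteq> V \<Longrightarrow> \<exists>ys. good E ys \<and> set ys = V"
proof (induction "card (V - set xs)" arbitrary: xs rule: less_induct)
  case less
  show ?case
  proof (cases "V \<subseteq> set xs")
    case True then show ?thesis using less by blast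
  next
    case False
    then obtain t where t: "t \<in> V" "t \<notin> set xs" by blast
    have "xs \<noteq> []" using good_props[OF less(2)] by blast
    then have "hd xs \<in> set xs" by simp
    then obtain z y where zy: "z \<in> set xs" "y \<in> V" "y \<notin> set xs" "{z,y} \<in> E"
      using leave[OF assms(2) less(3) _ t] by blast
    have g: "good E (xs @ [y])" using good.step[OF less(2) zy(3) zy(1) zy(4)] .
    have sub: "set (xs@[y]) \<subseteq> V" using less(3) zy(2) by simp
    have "V - set (xs@[y]) \<subset> V - set xs" using zy(2,3) by auto
    then have "card (V - set (xs@[y])) < card (V - set xs)"
      using assms(1) by (meson finite_Diff psubset_card_mono)
    then show ?thesis using less(1)[OF _ g sub] by blast
  qed
qed

theorem corollary4p2:
  fixes V :: "'a set" and E :: "'a set set" and n m :: nat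
  assumes "simple_graph V E" and "nice_graph V E"
    and "n = card V" and "m = card E"
  shows "(\<exists>w. irregularising V E w) \<and> MLW V E \<le> 2 * (m + n - 1) \<and> MLW V E \<le> 4 * m"
proof -
  have finV: "finite V" and edg: "\<forall>e\<in>E. \<exists>u v. u \<noteq> v \<and> u \<in> V \<and> v \<in> V \<and> e = {u, v}"
    using assms(1) unfolding simple_graph_def by auto
  have con: "connected_graph V E" and nk2: "\<not> (card V = 2 \<and> card E = 1)"
    using assms(2) unfolding nice_graph_def by auto
  have Vne: "V \<noteq> {}" using con unfolding connected_graph_def by auto
  then obtain a where a: "a \<in> V" by blast
  have EV: "{e\<in>E. e \<subseteq> V} = E" using edg by auto
  have uv_ne: "u \<noteq> v" if "{u,v} \<in> E" for u v
    using edg that by (metis doubleton_eq_iff insert_absorb2)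
  have uv_in: "u \<in> V \<and> v \<in> V" if "{u,v} \<in> E" for u v
    using edg that by (metis doubleton_eq_iff)
  show ?thesis
  proof (cases "V = {a}")
    case True
    have E0: "E = {}" using edg True by fastforce
    have irr: "irregularising V E [a]"
      unfolding irregularising_def is_walk_def using a E0 by simp
    then have "MLW V E \<le> walk_length [a]" unfolding MLW_def by (intro Least_le) blast
    then show ?thesis using irr by (auto simp: walk_length_def)
  next
    case False
    then obtain t where t: "t \<in> V" "t \<notin> {a}" using a by blast
    obtain z y where zy: "z \<in> {a}" "y \<in> V" "y \<notin> {a}" "{z,y} \<in> E"
      using leave[OF con _ _ t] a by blast
    have zy': "z = a" "y \<noteq> a" using zy by auto
    have "\<not> V \<subseteq> {a,y}"
    proof
      assume sub: "V \<subseteq> {a,y}"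
      then have VV: "V = {a,y}" using a zy(2) by auto
      have "E = {{a,y}}" using edg zy(4) zy' VV by fastforce
      then show False using nk2 VV zy' by simp
    qed
    then obtain t2 where t2: "t2 \<in> V" "t2 \<notin> {a,y}" by blast
    obtain z2 y2 where zy2: "z2 \<in> {a,y}" "y2 \<in> V" "y2 \<notin> {a,y}" "{z2,y2} \<in> E"
      using leave[OF con _ _ t2, of a] a zy(2) by blast
    have "\<exists>r u1 u2. good E [r,u1,u2] \<and> set [r,u1,u2] \<subseteq> V"
    proof (cases "z2 = a")
      case True
      then show ?thesis using zy zy' zy2 by (intro exI[of _ a] exI[of _ y] exI[of _ y2] conjI good.base) (auto simp: a)
    next
      case False
      then have "z2 = y" using zy2 by auto
      then show ?thesis using zy zy' zy2 by (intro exI[of _ y] exI[of _ a] exI[of _ y2] conjI good.base) (auto simp: insert_commute a)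
    qed
    then obtain r u1 u2 where g0: "good E [r,u1,u2]" and "set [r,u1,u2] \<subseteq> V" by blast
    then obtain ys where ys: "good E ys" "set ys = V" using extend[OF finV con g0] by blast
    have gp: "distinct ys \<and> ys \<noteq> [] \<and> length ys \<le> card {e\<in>E. e \<subseteq> set ys} + 1"
      using good_props[OF ys(1)] .
    have lenys: "length ys = n" using gp ys(2) assms(3) distinct_card by metis
    have fin0: "\<forall>v. finite ((\<lambda>_. {}::nat set) v)" by simp
    obtain w where w: "w \<noteq> []" "set w = set ys" "wk E w"
      "\<forall>u v. {u,v} \<in> E \<longrightarrow> u \<in> set ys \<longrightarrow> v \<in> set ys \<longrightarrow> u \<noteq> v \<longrightarrow>
         card {e\<in>E. u \<in> e} + wd w u \<noteq> card {e\<in>E. v \<in> e} + wd w v"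
      "length w \<le> 1 + 2*(length ys - 1) + 2*(card {e\<in>E. e \<subseteq> set ys} + (\<Sum>v\<in>set ys. card ((\<lambda>_. {}::nat set) v)))"
      using main[OF ys(1), rule_format, of "\<lambda>_. {}" "\<lambda>v. card {e\<in>E. v \<in> e}"] by auto
    have irr: "irregularising V E w"
      unfolding irregularising_def is_walk_def deg_plus_walk_def
    proof (intro conjI allI impI)
      show "w \<noteq> []" by fact
      show "set w \<subseteq> V" using w(2) ys(2) by simp
      fix i assume "i + 1 < length w"
      then show "{w ! i, w ! (i + 1)} \<in> E" using w(3) wk_iff by blast
    next
      fix u v assume uv: "{u,v} \<in> E"
      show "card {e\<in>E. u \<in> e} + card {i. i + 1 < length w \<and> (w ! i = u \<or> w ! (i + 1) = u)} \<noteq>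
                 card {e\<in>E. v \<in> e} + card {i. i + 1 < length w \<and> (w ! i = v \<or> w ! (i + 1) = v)}"
      proof -
        have "card {e\<in>E. u \<in> e} + wd w u \<noteq> card {e\<in>E. v \<in> e} + wd w v"
          using w(4) uv uv_in[OF uv] uv_ne[OF uv] ys(2) by blast
        then show ?thesis by (simp add: wd_card)
      qed
    qed
    have len: "length w \<le> 1 + 2*(n - 1) + 2*m" using w(5) lenys ys(2) EV assms(4) by simp
    have "MLW V E \<le> walk_length w" unfolding MLW_def using irr by (intro Least_le) blast
    then have M: "MLW V E \<le> 2*(n-1) + 2*m" using len unfolding walk_length_def by simp
    have nm: "n \<le> m + 1" using gp lenys ys(2) EV assms(4) by simp
    have n1: "n \<ge> 1" using Vne finV assms(3) by (simp add: Suc_le_eq card_gt_0_iff)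
    have e1: "2*(n-1) + 2*m = 2*(m+n-1)" using n1 by (cases n) auto
    have e2: "2*(m+n-1) \<le> 4*m" using nm n1 by (cases n) auto
    show ?thesis using irr M e1 e2 by auto
  qed
qed

end
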